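(* Let $d\geq 2$ and $R\geq 1$ be integers and let $T_{d,R}$ be the rooted tree described below. Then the largest adjacency eigenvalue and the largest laplacian eigenvalue of $T_{d,R}$ are $$\alpha_{\max}=2\sqrt{d-1}\,\cos\frac{\pi}{R+2},\qquad \lambda_{\max}=d+2\sqrt{d-1}\,\cos\frac{\pi}{R+1}.$$
   Context: $T_{d,R}$ is the finite tree with a root vertex of degree $d-1$, all of whose pendant vertices (leaves) lie at distance exactly $R$ from the root, and all of whose remaining (intermediate) vertices have degree $d$. The adjacency eigenvalues are the eigenvalues of the adjacency matrix $A$; the laplacian eigenvalues are the eigenvalues of $L=\mathrm{diag}(\deg)-A$. *)

theory Defs
  imports "Jordan_Normal_Form.Char_Poly" Complex_Main
begin

text \<open>The tree T_{d,R}: root of degree d-1, every intermediate vertex of degree d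
  (i.e. d-1 children), all leaves at depth R.  Vertices are numbered 0..n-1 in breadth-first (heap) order with
  m = d-1 children per internal vertex: the root is 0, the parent of vertex j > 0 is
  (j - 1) div m, and the children of i are m*i+1, ..., m*i+m.\<close>

definition tree_size :: "nat \<Rightarrow> nat \<Rightarrow> nat" where
  "tree_size d R = (\<Sum>k\<le>R. (d - 1) ^ k)"

definition tree_adj :: "nat \<Rightarrow> nat \<Rightarrow> nat \<Rightarrow> bool" where
  "tree_adj d i j \<longleftrightarrow> (0 < j \<and> i = (j - 1) div (d - 1)) \<or> (0 < i \<and> j = (i - 1) div (d - 1))"

definition tree_adj_mat :: "nat \<Rightarrow> nat \<Rightarrow> real mat" where
  "tree_adj_mat d R = mat (tree_size d R) (tree_size d R)
     (\<lambda>(i, j). if tree_adj d i j then 1 else 0)"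

definition tree_deg :: "nat \<Rightarrow> nat \<Rightarrow> nat \<Rightarrow> nat" where
  "tree_deg d R i = card {j. j < tree_size d R \<and> tree_adj d i j}"

definition tree_lap_mat :: "nat \<Rightarrow> nat \<Rightarrow> real mat" where
  "tree_lap_mat d R = mat (tree_size d R) (tree_size d R)
     (\<lambda>(i, j). (if i = j then real (tree_deg d R i) else 0) - (if tree_adj d i j then 1 else 0))"

end

theory Submission
  imports Defs
begin


function dep :: "nat \<Rightarrow> nat \<Rightarrow> nat" where
  "dep m i = (if i = 0 then 0 else Suc (dep m ((i - 1) div m)))"
  by pat_completeness auto
termination
  by (relation "measure snd") (auto intro: le_less_trans[OF div_le_dividend])

declare dep.simps[simp del]

lemma dep0[simp]: "dep m 0 = 0" by (simp add: dep.simps)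
lemma depS: "i > 0 \<Longrightarrow> dep m i = Suc (dep m ((i - 1) div m))" by (simp add: dep.simps)

definition NN :: "nat \<Rightarrow> nat \<Rightarrow> nat" where "NN m k = (\<Sum>j<k. m ^ j)"

lemma NN_Suc: "NN m (Suc k) = m * NN m k + 1"
  unfolding NN_def by (subst sum.lessThan_Suc_shift) (simp add: sum_distrib_left)

lemma NN_Suc2: "NN m (Suc k) = NN m k + m ^ k" by (simp add: NN_def)

lemma NN_strict: assumes "m \<ge> 1" "k < l" shows "NN m k < NN m l"
  using assms(2)
proof (induction l)
  case 0 then show ?case by simp
next
  case (Suc l)
  have "NN m l < NN m (Suc l)" using assms(1) by (simp add: NN_Suc2)
  then show ?case using Suc by (cases "k = l") auto
qed

lemma NN_mono: assumes "m \<ge> 1" "k \<le> l" shows "NN m k \<le> NN m l"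
  using NN_strict[OF assms(1)] assms(2) by (cases "k = l") (auto simp: less_imp_le)

lemma dep_bounds: assumes "m \<ge> 1" shows "NN m (dep m i) \<le> i \<and> i < NN m (Suc (dep m i))"
proof (induction i rule: less_induct)
  case (less i)
  show ?case
  proof (cases "i = 0")
    case True then show ?thesis by (simp add: NN_def)
  next
    case False
    define p where "p = (i - 1) div m"
    have "p < i" using False unfolding p_def by (meson diff_less div_le_dividend le_less_trans less_one not_gr_zero)
    with less have IH: "NN m (dep m p) \<le> p" "p < NN m (Suc (dep m p))" by auto
    have dp: "dep m i = Suc (dep m p)" using False depS p_def by auto
    have a: "m * p \<le> i - 1" unfolding p_def by (simp add: mult.commute)
    have mm: "(i - 1) mod m < m" using assms by simp
    have dm: "m * p + (i - 1) mod m = i - 1" unfolding p_def by simp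
    have b: "i - 1 < m * (p + 1)" using mm dm by simp
    have "NN m (Suc (dep m p)) = m * NN m (dep m p) + 1" by (rule NN_Suc)
    also have "\<dots> \<le> i"
    proof -
      have "m * NN m (dep m p) \<le> m * p" using IH(1) by simp
      then show ?thesis using a False by linarith
    qed
    finally have 1: "NN m (dep m i) \<le> i" using dp by simp
    have "p + 1 \<le> NN m (Suc (dep m p))" using IH(2) by simp
    then have "m * (p+1) \<le> m * NN m (Suc (dep m p))" by (rule mult_le_mono2)
    then have "i \<le> m * NN m (Suc (dep m p))" using b by linarith
    then have "i < NN m (Suc (Suc (dep m p)))" using NN_Suc[of m "Suc (dep m p)"] by linarith
    with 1 dp show ?thesis by simp
  qed
qed

lemma in_tree_iff: assumes "m \<ge> 1" shows "i < NN m (Suc R) \<longleftrightarrow> dep m i \<le> R"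
proof
  assume "i < NN m (Suc R)"
  show "dep m i \<le> R"
  proof (rule ccontr)
    assume "\<not> dep m i \<le> R"
    then have "NN m (Suc R) \<le> NN m (dep m i)" using NN_mono[OF assms] by simp
    with dep_bounds[OF assms, of i] \<open>i < NN m (Suc R)\<close> show False by linarith
  qed
next
  assume "dep m i \<le> R"
  then have "NN m (Suc (dep m i)) \<le> NN m (Suc R)" using NN_mono[OF assms] by simp
  with dep_bounds[OF assms, of i] show "i < NN m (Suc R)" by linarith
qed

lemma tree_size_NN: "tree_size d R = NN (d - 1) (Suc R)"
  unfolding tree_size_def NN_def using lessThan_Suc_atMost by simp

lemma child_div: fixes m i j :: nat assumes "m \<ge> 1" "m*i+1 \<le> j" "j \<le> m*i+m" shows "(j - 1) div m = i"
proof -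
  have "m * i \<le> j - 1" using assms(2) by (metis add_le_imp_le_diff)
  have "j - 1 < m * i + m" using assms by arith
  then show ?thesis using \<open>m * i \<le> j - 1\<close> by (intro div_nat_eqI) auto
qed

lemma child_dep: fixes m i j :: nat assumes "m \<ge> 1" "m*i+1 \<le> j" "j \<le> m*i+m" shows "dep m j = Suc (dep m i)"
  using child_div[OF assms] assms depS[of j m] by auto

lemma adj_iff: assumes "m \<ge> 1" "d = Suc m"
  shows "tree_adj d i j \<longleftrightarrow> (i > 0 \<and> j = (i - 1) div m) \<or> (m*i+1 \<le> j \<and> j \<le> m*i+m)"
proof -
  have "(0 < j \<and> i = (j - 1) div m) \<longleftrightarrow> (m*i+1 \<le> j \<and> j \<le> m*i+m)"
  proof
    assume h: "0 < j \<and> i = (j - 1) div m"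
    then have "m * i \<le> j - 1" by (simp add: mult.commute)
    moreover have "j - 1 < m * i + m"
    proof -
      have mm: "(j - 1) mod m < m" using assms by simp
      have dm: "m * ((j - 1) div m) + (j - 1) mod m = j - 1" by simp
      have "j - 1 < m * ((j - 1) div m + 1)" using mm dm by (simp only: distrib_left)
      then show ?thesis using h by (simp add: algebra_simps)
    qed
    ultimately show "m*i+1 \<le> j \<and> j \<le> m*i+m" using h by (intro conjI; linarith)
  next
    assume h: "m*i+1 \<le> j \<and> j \<le> m*i+m"
    then show "0 < j \<and> i = (j - 1) div m" using child_div[OF assms(1)] by auto
  qed
  then show ?thesis unfolding tree_adj_def using assms(2) by auto
qed



lemma nbr_set: assumes m: "m \<ge> 1" and d: "d = Suc m" and i: "i < NN m (Suc R)"
  shows "{j. j < NN m (Suc R) \<and> tree_adj d i j} =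
     (if i > 0 then {(i - 1) div m} else {}) \<union> (if dep m i < R then {m*i+1..m*i+m} else {})"
proof -
  have par: "(i - 1) div m < NN m (Suc R)" if "i > 0"
    using i that div_le_dividend[of "i - 1" m] by linarith
  have ch: "j < NN m (Suc R) \<longleftrightarrow> dep m i < R" if "m*i+1 \<le> j" "j \<le> m*i+m" for j
    using in_tree_iff[OF m] child_dep[OF m that] by (simp add: Suc_le_eq)
  show ?thesis
    using par ch by (auto simp: adj_iff[OF m d] Suc_le_eq)
qed

lemma nbr_disj: fixes m i :: nat assumes m: "m \<ge> 1" shows "(if i > 0 then {(i - 1) div m} else {}) \<inter> {m*i+1..m*i+m} = {}"
proof -
  have "(i - 1) div m < m * i + 1" if "i > 0"
  proof -
    have "(i - 1) div m \<le> i - 1" by simp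
    moreover have "i \<le> m * i" using m by simp
    ultimately show ?thesis using that by linarith
  qed
  then show ?thesis by auto
qed

lemma nbr_sum: fixes w :: "nat \<Rightarrow> real"
  assumes m: "m \<ge> 1" and d: "d = Suc m" and i: "i < NN m (Suc R)"
  shows "(\<Sum>j<NN m (Suc R). (if tree_adj d i j then 1 else 0) * w j) =
     (if i > 0 then w ((i - 1) div m) else 0) + (if dep m i < R then (\<Sum>j\<in>{m*i+1..m*i+m}. w j) else 0)"
proof -
  have "(\<Sum>j<NN m (Suc R). (if tree_adj d i j then 1 else 0) * w j) =
        (\<Sum>j<NN m (Suc R). (if tree_adj d i j then w j else 0))"
    by (rule sum.cong) auto
  also have "\<dots> = sum w {j \<in> {..<NN m (Suc R)}. tree_adj d i j}"
    by (rule sum.inter_filter[symmetric]) simp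
  also have "{j \<in> {..<NN m (Suc R)}. tree_adj d i j} = {j. j < NN m (Suc R) \<and> tree_adj d i j}" by auto
  also have "\<dots> = (if i > 0 then {(i - 1) div m} else {}) \<union> (if dep m i < R then {m*i+1..m*i+m} else {})"
    by (rule nbr_set[OF m d i])
  also have "sum w \<dots> = sum w (if i > 0 then {(i - 1) div m} else {}) + sum w (if dep m i < R then {m*i+1..m*i+m} else {})"
    by (rule sum.union_disjoint) (use nbr_disj[OF m, of i] in auto)
  finally show ?thesis by simp
qed

lemma deg_eq: assumes m: "m \<ge> 1" and d: "d = Suc m" and i: "i < NN m (Suc R)"
  shows "tree_deg d R i = (if i > 0 then 1 else 0) + (if dep m i < R then m else 0)"
proof -
  have "tree_deg d R i = card ((if i > 0 then {(i - 1) div m} else {}) \<union> (if dep m i < R then {m*i+1..m*i+m} else {}))"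
    unfolding tree_deg_def tree_size_NN using nbr_set[OF m d i] d by simp
  also have "\<dots> = card (if i > 0 then {(i - 1) div m} else {}) + card (if dep m i < R then {m*i+1..m*i+m} else {})"
    by (rule card_Un_disjoint) (use nbr_disj[OF m, of i] in auto)
  finally show ?thesis by simp
qed

lemma cw_bound: fixes c u v :: "nat \<Rightarrow> real" and B :: "nat \<Rightarrow> nat \<Rightarrow> real"
  assumes B: "\<And>i j. i < n \<Longrightarrow> j < n \<Longrightarrow> B i j \<ge> 0"
    and u: "\<And>i. i < n \<Longrightarrow> u i > 0"
    and ueq: "\<And>i. i < n \<Longrightarrow> c i * u i + (\<Sum>j<n. B i j * u j) = lam * u i"
    and veq: "\<And>i. i < n \<Longrightarrow> \<bar>(a - c i) * v i\<bar> \<le> (\<Sum>j<n. B i j * \<bar>v j\<bar>)"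
    and nz: "k < n" "v k \<noteq> 0"
  shows "a \<le> lam"
proof -
  define r where "r j = \<bar>v j\<bar> / u j" for j
  define t where "t = Max (r ` {..<n})"
  have fin: "finite (r ` {..<n})" by simp
  have ne: "r ` {..<n} \<noteq> {}" using nz by auto
  obtain i0 where i0: "i0 < n" "r i0 = t" using Max_in[OF fin ne] unfolding t_def by auto
  have rle: "r j \<le> t" if "j < n" for j unfolding t_def using fin that by auto
  have vle: "\<bar>v j\<bar> \<le> t * u j" if "j < n" for j
    using rle[OF that] u[OF that] unfolding r_def by (simp add: divide_le_eq)
  have "r k > 0" using nz u[of k] unfolding r_def by simp
  then have tpos: "t > 0" using rle[OF nz(1)] by linarith
  have vi0: "\<bar>v i0\<bar> = t * u i0" using i0 u[OF i0(1)] unfolding r_def by (simp add: divide_eq_eq)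
  have "(a - c i0) * \<bar>v i0\<bar> \<le> \<bar>(a - c i0) * v i0\<bar>" by (simp add: abs_mult mult_right_mono)
  also have "\<dots> \<le> (\<Sum>j<n. B i0 j * \<bar>v j\<bar>)" by (rule veq[OF i0(1)])
  also have "\<dots> \<le> (\<Sum>j<n. B i0 j * (t * u j))"
    by (rule sum_mono) (use B i0(1) vle in \<open>auto intro: mult_left_mono\<close>)
  also have "\<dots> = t * (\<Sum>j<n. B i0 j * u j)" by (simp add: sum_distrib_left algebra_simps)
  also have "(\<Sum>j<n. B i0 j * u j) = lam * u i0 - c i0 * u i0" using ueq[OF i0(1)] by linarith
  also have "t * (lam * u i0 - c i0 * u i0) = t * u i0 * (lam - c i0)" by (simp add: algebra_simps)
  finally have calc: "(a - c i0) * (t * u i0) \<le> (lam - c i0) * (t * u i0)" using vi0 by (simp add: algebra_simps)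
  have pos: "t * u i0 > 0" using tpos u[OF i0(1)] by simp
  have "a - c i0 \<le> lam - c i0" using mult_le_cancel_right_pos[OF pos] calc by blast
  then show ?thesis by linarith
qed

lemma sin_rec: "sin (x - t) + sin (x + t) = 2 * cos t * sin (x :: real)"
  by (simp add: sin_diff sin_add)



definition Fs :: "real \<Rightarrow> real \<Rightarrow> real \<Rightarrow> nat \<Rightarrow> real" where
  "Fs s t c k = sin ((real k + c) * t) / s ^ k"

lemma Fs_rec: assumes s: "s > 0"
  shows "Fs s t c k + s\<^sup>2 * Fs s t c (k + 2) = 2 * s * cos t * Fs s t c (k + 1)"
proof -
  have e1: "(real k + c + 1) * t - t = (real k + c) * t" by (simp add: algebra_simps)
  have e2: "(real k + c + 1) * t + t = (real (k + 2) + c) * t" by (simp add: algebra_simps)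
  have e3: "real (k + 1) + c = real k + c + 1" by simp
  have sm: "sin ((real k + c) * t) + sin ((real (k + 2) + c) * t) = 2 * cos t * sin ((real (k+1) + c) * t)"
    using sin_rec[of "(real k + c + 1) * t" t] unfolding e1 e2 e3 .
  have "Fs s t c k + s\<^sup>2 * Fs s t c (k + 2) = (sin ((real k + c) * t) + sin ((real (k + 2) + c) * t)) / s ^ k"
    unfolding Fs_def using s by (simp add: field_simps power_add power2_eq_square)
  also have "\<dots> = 2 * s * cos t * Fs s t c (k + 1)"
    unfolding sm Fs_def using s by (simp add: field_simps)
  finally show ?thesis .
qed

lemma dep_pos_iff: "0 < dep m i \<longleftrightarrow> 0 < i"
  using depS[of i m] by (cases "i = 0") auto

lemma radial_sum: fixes F :: "nat \<Rightarrow> real"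
  assumes m: "m \<ge> 1" and d: "d = Suc m" and i: "i < NN m (Suc R)"
  shows "(\<Sum>j<NN m (Suc R). (if tree_adj d i j then 1 else 0) * F (dep m j)) =
     (if 0 < dep m i then F (dep m i - 1) else 0) + (if dep m i < R then real m * F (Suc (dep m i)) else 0)"
proof -
  have par: "dep m ((i - 1) div m) = dep m i - 1" if "i > 0" using depS[OF that, of m] by simp
  have ch: "(\<Sum>j\<in>{m*i+1..m*i+m}. F (dep m j)) = real m * F (Suc (dep m i))"
  proof -
    have "(\<Sum>j\<in>{m*i+1..m*i+m}. F (dep m j)) = (\<Sum>j\<in>{m*i+1..m*i+m}. F (Suc (dep m i)))"
      by (rule sum.cong) (auto simp: child_dep[OF m])
    also have "\<dots> = real m * F (Suc (dep m i))" using m by simp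
    finally show ?thesis .
  qed
  show ?thesis unfolding nbr_sum[OF m d i] ch using par dep_pos_iff[of m i] by auto
qed

lemma adj_eq:
  fixes s t :: real
  assumes s: "s > 0" and R: "R \<ge> 1" and t: "t = pi / (real R + 2)" and k: "k \<le> R"
  shows "(if 0 < k then Fs s t 1 (k - 1) else 0) + (if k < R then s\<^sup>2 * Fs s t 1 (Suc k) else 0)
          = 2 * s * cos t * Fs s t 1 k"
proof -
  have z: "Fs s t 1 (R + 1) = 0"
  proof -
    have "(real (R + 1) + 1) * t = pi" unfolding t by (simp add: field_simps)
    then show ?thesis unfolding Fs_def by simp
  qed
  have z0: "Fs s t 1 0 * 0 = 0" by simp
  show ?thesis
  proof (cases k)
    case 0
    have "Fs s t 0 0 = 0" by (simp add: Fs_def)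
    have "s\<^sup>2 * Fs s t 1 1 = 2 * s * cos t * Fs s t 1 0"
    proof -
      have "sin ((real 0 + 1 + 1) * t) = 2 * cos t * sin ((real 0 + 1) * t)"
        by (simp add: sin_double)
      then show ?thesis unfolding Fs_def using s by (simp add: field_simps power2_eq_square)
    qed
    then show ?thesis using 0 R by simp
  next
    case (Suc j)
    have r: "Fs s t 1 j + s\<^sup>2 * Fs s t 1 (j + 2) = 2 * s * cos t * Fs s t 1 (j + 1)" by (rule Fs_rec[OF s])
    show ?thesis
    proof (cases "Suc j < R")
      case True then show ?thesis using r Suc by simp
    next
      case False
      then have RR: "R = Suc j" using Suc k by simp
      show ?thesis using r Suc z unfolding RR by simp
    qed
  qed
qed

lemma l0: fixes S M e0 e1 e2 :: real
  assumes "e0 = 0" "e0 + S*e2 = M*e1"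
  shows "S*(e0 + S*e1) + S*(e1 + S*e2) = (S + 1 + M)*(e0 + S*e1)"
proof -
  have "S*e2 = M*e1" using assms by simp
  then have "S*(S*e2) = S*(M*e1)" by simp
  then show ?thesis using assms(1) by (simp add: algebra_simps)
qed
lemma l1: fixes S M a b c d :: real
  assumes "a + S*c = M*b" "b + S*d = M*c"
  shows "(1 + S)*(b + S*c) + (a + S*b) + S*(c + S*d) = (S + 1 + M)*(b + S*c)"
proof -
  have "a = M*b - S*c" using assms by (simp_all add: algebra_simps)
  moreover have "S*d = M*c - b" using assms by (simp_all add: algebra_simps)
  then have "S*(S*d) = S*(M*c - b)" by simp
  ultimately show ?thesis by (simp add: algebra_simps)
qed
lemma l2: fixes S M a b c :: real
  assumes "a + S*c = M*b" "c = 0"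
  shows "(b + S*c) + (a + S*b) = (S + 1 + M)*(b + S*c)"
  using assms by (simp add: algebra_simps)

definition Gs :: "real \<Rightarrow> real \<Rightarrow> nat \<Rightarrow> real" where
  "Gs s t k = Fs s t 0 k + s\<^sup>2 * Fs s t 0 (Suc k)"

lemma lap_eq:
  fixes s t :: real
  assumes s: "s > 0" and R: "R \<ge> 1" and t: "t = pi / (real R + 1)" and k: "k \<le> R"
  shows "((if 0 < k then 1 else 0) + (if k < R then s\<^sup>2 else 0)) * Gs s t k
     + (if 0 < k then Gs s t (k - 1) else 0) + (if k < R then s\<^sup>2 * Gs s t (Suc k) else 0)
          = (s\<^sup>2 + 1 + 2 * s * cos t) * Gs s t k"
proof -
  have z: "Fs s t 0 (R + 1) = 0"
  proof -
    have "(real (R + 1) + 0) * t = pi" unfolding t by (simp add: field_simps)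
    then show ?thesis unfolding Fs_def by simp
  qed
  have z0: "Fs s t 0 0 = 0" by (simp add: Fs_def)
  have r: "\<And>j. Fs s t 0 j + s\<^sup>2 * Fs s t 0 (j + 2) = 2 * s * cos t * Fs s t 0 (j + 1)" by (rule Fs_rec[OF s])
  show ?thesis
  proof (cases k)
    case 0
    have r0: "Fs s t 0 0 + s\<^sup>2 * Fs s t 0 (Suc (Suc 0)) = 2 * s * cos t * Fs s t 0 (Suc 0)" using r[of 0] by simp
    have "s\<^sup>2 * Gs s t 0 + s\<^sup>2 * Gs s t (Suc 0) = (s\<^sup>2 + 1 + 2 * s * cos t) * Gs s t 0"
      unfolding Gs_def using l0[OF z0 r0] by simp
    then show ?thesis using 0 R by simp
  next
    case (Suc j)
    have r1: "Fs s t 0 j + s\<^sup>2 * Fs s t 0 (Suc (Suc j)) = 2 * s * cos t * Fs s t 0 (Suc j)" using r[of j] by simp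
    show ?thesis
    proof (cases "Suc j < R")
      case True
      have r2: "Fs s t 0 (Suc j) + s\<^sup>2 * Fs s t 0 (Suc (Suc (Suc j))) = 2 * s * cos t * Fs s t 0 (Suc (Suc j))" using r[of "Suc j"] by simp
      have "(1 + s\<^sup>2) * Gs s t (Suc j) + Gs s t j + s\<^sup>2 * Gs s t (Suc (Suc j)) = (s\<^sup>2 + 1 + 2 * s * cos t) * Gs s t (Suc j)"
        unfolding Gs_def using l1[OF r1 r2] by simp
      then show ?thesis using True Suc by simp
    next
      case False
      then have RR: "R = Suc j" using Suc k by simp
      have z': "Fs s t 0 (Suc (Suc j)) = 0" using z unfolding RR by simp
      have "Gs s t (Suc j) + Gs s t j = (s\<^sup>2 + 1 + 2 * s * cos t) * Gs s t (Suc j)"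
        unfolding Gs_def using l2[OF r1 z'] by simp
      then show ?thesis using Suc unfolding RR by simp
    qed
  qed
qed



lemma FsA_pos: assumes s: "s > 0" and t: "t = pi / (real R + 2)" and k: "k \<le> R"
  shows "Fs s t 1 k > 0"
proof -
  have "pi * real k < pi * (real R + 1)" using k by (intro mult_strict_left_mono) auto
  then have "(real k + 1) * t < pi" unfolding t by (simp add: field_simps)
  moreover have "(real k + 1) * t > 0" unfolding t by simp
  ultimately have "sin ((real k + 1) * t) > 0" by (intro sin_gt_zero)
  then show ?thesis unfolding Fs_def using s by simp
qed

lemma FsL_nonneg: assumes s: "s > 0" and t: "t = pi / (real R + 1)" and k: "k \<le> Suc R"
  shows "Fs s t 0 k \<ge> 0"
proof -
  have "pi * real k \<le> pi * (real R + 1)" using k by (intro mult_left_mono) auto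
  then have "(real k + 0) * t \<le> pi" unfolding t by (simp add: field_simps)
  moreover have "(real k + 0) * t \<ge> 0" unfolding t by simp
  ultimately have "sin ((real k + 0) * t) \<ge> 0" by (intro sin_ge_zero)
  then show ?thesis unfolding Fs_def using s by simp
qed

lemma FsL_pos: assumes s: "s > 0" and t: "t = pi / (real R + 1)" and k: "k \<le> R" "k \<ge> 1"
  shows "Fs s t 0 k > 0"
proof -
  have "pi * real k < pi * (real R + 1)" using k by (intro mult_strict_left_mono) auto
  then have "(real k + 0) * t < pi" unfolding t by (simp add: field_simps)
  moreover have "(real k + 0) * t > 0" unfolding t using k by simp
  ultimately have "sin ((real k + 0) * t) > 0" by (intro sin_gt_zero)
  then show ?thesis unfolding Fs_def using s by simp
qed

lemma Gs_pos: assumes s: "s > 0" and t: "t = pi / (real R + 1)" and k: "k \<le> R" and R: "R \<ge> 1"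
  shows "Gs s t k > 0"
proof -
  have a: "Fs s t 0 k \<ge> 0" "Fs s t 0 (Suc k) \<ge> 0" using FsL_nonneg[OF s t] k by auto
  have s2: "s\<^sup>2 > 0" using s by simp
  show ?thesis
  proof (cases "k = 0")
    case True
    have "Fs s t 0 (Suc k) > 0" using FsL_pos[OF s t] True R by simp
    then show ?thesis unfolding Gs_def using a s2 by (simp add: add_nonneg_pos)
  next
    case False
    have "Fs s t 0 k > 0" using FsL_pos[OF s t] False k by simp
    then show ?thesis unfolding Gs_def using a s2 by (simp add: add_pos_nonneg)
  qed
qed

lemma adj_carrier: "tree_adj_mat d R \<in> carrier_mat (tree_size d R) (tree_size d R)"
  by (simp add: tree_adj_mat_def)

lemma lap_carrier: "tree_lap_mat d R \<in> carrier_mat (tree_size d R) (tree_size d R)"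
  by (simp add: tree_lap_mat_def)

lemma adj_mult: assumes "v \<in> carrier_vec (tree_size d R)" "i < tree_size d R"
  shows "(tree_adj_mat d R *\<^sub>v v) $ i = (\<Sum>j<tree_size d R. (if tree_adj d i j then 1 else 0) * v $ j)"
  using assms by (simp add: tree_adj_mat_def scalar_prod_def atLeast0LessThan)

lemma lap_mult: assumes "v \<in> carrier_vec (tree_size d R)" "i < tree_size d R"
  shows "(tree_lap_mat d R *\<^sub>v v) $ i = real (tree_deg d R i) * v $ i
     - (\<Sum>j<tree_size d R. (if tree_adj d i j then 1 else 0) * v $ j)"
proof -
  have "(tree_lap_mat d R *\<^sub>v v) $ i = (\<Sum>j<tree_size d R.
      ((if i = j then real (tree_deg d R i) else 0) - (if tree_adj d i j then 1 else 0)) * v $ j)"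
    using assms by (simp add: tree_lap_mat_def scalar_prod_def atLeast0LessThan)
  also have "\<dots> = (\<Sum>j<tree_size d R. (if i = j then real (tree_deg d R i) else 0) * v $ j)
     - (\<Sum>j<tree_size d R. (if tree_adj d i j then 1 else 0) * v $ j)"
    by (simp add: left_diff_distrib sum_subtractf)
  also have "(\<Sum>j<tree_size d R. (if i = j then real (tree_deg d R i) else 0) * v $ j) = real (tree_deg d R i) * v $ i"
  proof -
    have "(\<Sum>j<tree_size d R. (if i = j then real (tree_deg d R i) else 0) * v $ j)
        = (\<Sum>j<tree_size d R. (if i = j then real (tree_deg d R i) * v $ i else 0))"
      by (rule sum.cong) auto
    then show ?thesis using assms(2) by (simp add: sum.delta sum.delta')
  qed
  finally show ?thesis .
qed

lemma finite_eigs: assumes "A \<in> carrier_mat n n" shows "finite {a :: real. eigenvalue A a}"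
proof -
  have "char_poly A \<noteq> 0" using degree_monic_char_poly[OF assms] by auto
  then have "finite {a. poly (char_poly A) a = 0}" by (rule poly_roots_finite)
  then show ?thesis using eigenvalue_root_char_poly[OF assms] by simp
qed

lemma nonzero_entry: assumes "v \<in> carrier_vec n" "v \<noteq> 0\<^sub>v n" obtains k where "k < n" "v $ k \<noteq> 0"
proof -
  have "\<exists>k<n. v $ k \<noteq> 0"
  proof (rule ccontr)
    assume "\<not> (\<exists>k<n. v $ k \<noteq> 0)"
    then have "v = 0\<^sub>v n" using assms(1) by (intro eq_vecI) auto
    with assms(2) show False by simp
  qed
  then show ?thesis using that by blast
qed

lemma abs_sum_le: fixes v :: "nat \<Rightarrow> real"
  shows "\<bar>\<Sum>j<n. (if P j then 1 else 0) * v j\<bar> \<le> (\<Sum>j<n. (if P j then 1 else 0) * \<bar>v j\<bar>)"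
proof -
  have "\<bar>\<Sum>j<n. (if P j then 1 else 0) * v j\<bar> \<le> (\<Sum>j<n. \<bar>(if P j then 1 else 0) * v j\<bar>)" by (rule sum_abs)
  also have "\<dots> = (\<Sum>j<n. (if P j then 1 else 0) * \<bar>v j\<bar>)" by (rule sum.cong) auto
  finally show ?thesis .
qed



lemma adj_part:
  assumes m: "m \<ge> 1" and d: "d = Suc m" and R: "R \<ge> 1"
  shows "Max {a. eigenvalue (tree_adj_mat d R) a} = 2 * sqrt (real m) * cos (pi / (real R + 2))"
proof -
  define n where "n = tree_size d R"
  have nN: "n = NN m (Suc R)" unfolding n_def tree_size_NN d by simp
  define s where "s = sqrt (real m)"
  have s: "s > 0" using m unfolding s_def by simp
  have s2: "s\<^sup>2 = real m" unfolding s_def by simp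
  define t where "t = pi / (real R + 2)"
  define mu where "mu = 2 * s * cos t"
  define A where "A = tree_adj_mat d R"
  have Ac: "A \<in> carrier_mat n n" unfolding A_def n_def by (rule adj_carrier)
  define B where "B = (\<lambda>i j. if tree_adj d i j then 1 else (0::real))"
  define U where "U = (\<lambda>i. Fs s t 1 (dep m i))"
  have depR: "dep m i \<le> R" if "i < n" for i using in_tree_iff[OF m] that nN by simp
  have Upos: "U i > 0" if "i < n" for i unfolding U_def using FsA_pos[OF s t_def depR[OF that]] .
  have Ueq: "(\<Sum>j<n. B i j * U j) = mu * U i" if i: "i < n" for i
  proof -
    have "(\<Sum>j<n. B i j * U j) = (if 0 < dep m i then Fs s t 1 (dep m i - 1) else 0)
        + (if dep m i < R then real m * Fs s t 1 (Suc (dep m i)) else 0)"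
      unfolding B_def U_def nN using radial_sum[OF m d, of i R "Fs s t 1"] i nN by simp
    also have "\<dots> = mu * U i"
      unfolding mu_def U_def using adj_eq[OF s R t_def depR[OF i], unfolded s2] by simp
    finally show ?thesis .
  qed
  have n0: "0 < n" using depR[of 0] nN NN_strict[OF m, of 0 "Suc R"] by (simp add: NN_def)
  have mem: "mu \<in> {a. eigenvalue A a}"
  proof -
    define u where "u = vec n U"
    have uc: "u \<in> carrier_vec n" unfolding u_def by simp
    have "u \<noteq> 0\<^sub>v n"
    proof
      assume "u = 0\<^sub>v n"
      then have "u $ 0 = 0" using n0 by simp
      then show False using Upos[OF n0] unfolding u_def using n0 by simp
    qed
    moreover have "A *\<^sub>v u = mu \<cdot>\<^sub>v u"
    proof (rule eq_vecI)
      show "dim_vec (A *\<^sub>v u) = dim_vec (mu \<cdot>\<^sub>v u)" using Ac uc by simp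
      fix i assume "i < dim_vec (mu \<cdot>\<^sub>v u)"
      then have i: "i < n" using uc by simp
      have "(A *\<^sub>v u) $ i = (\<Sum>j<n. B i j * u $ j)" unfolding A_def B_def n_def
        using adj_mult uc i n_def by simp
      also have "\<dots> = (\<Sum>j<n. B i j * U j)" unfolding u_def by (rule sum.cong) auto
      also have "\<dots> = (mu \<cdot>\<^sub>v u) $ i" using Ueq[OF i] i unfolding u_def by simp
      finally show "(A *\<^sub>v u) $ i = (mu \<cdot>\<^sub>v u) $ i" .
    qed
    ultimately show ?thesis unfolding eigenvalue_def eigenvector_def using uc Ac by auto
  qed
  have le: "a \<le> mu" if ha: "a \<in> {a. eigenvalue A a}" for a
  proof -
    obtain v where v: "v \<in> carrier_vec n" "v \<noteq> 0\<^sub>v n" "A *\<^sub>v v = a \<cdot>\<^sub>v v"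
      using ha Ac unfolding eigenvalue_def eigenvector_def by auto
    obtain k where k: "k < n" "v $ k \<noteq> 0" using nonzero_entry[OF v(1,2)] by blast
    show ?thesis
    proof (rule cw_bound[where c = "\<lambda>_. 0" and B = B and u = U and v = "\<lambda>j. v $ j" and n = n])
      show "\<And>i j. i < n \<Longrightarrow> j < n \<Longrightarrow> 0 \<le> B i j" unfolding B_def by simp
      show "\<And>i. i < n \<Longrightarrow> 0 < U i" by (rule Upos)
      show "\<And>i. i < n \<Longrightarrow> 0 * U i + (\<Sum>j<n. B i j * U j) = mu * U i" using Ueq by simp
      show "k < n" "v $ k \<noteq> 0" by (rule k(1), rule k(2))
      fix i assume i: "i < n"
      have "a * v $ i = (A *\<^sub>v v) $ i" using v(3) i v(1) by simp
      also have "\<dots> = (\<Sum>j<n. B i j * v $ j)" unfolding A_def B_def n_def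
        using adj_mult v(1) i n_def by simp
      finally have "\<bar>(a - 0) * v $ i\<bar> = \<bar>\<Sum>j<n. B i j * v $ j\<bar>" by simp
      also have "\<dots> \<le> (\<Sum>j<n. B i j * \<bar>v $ j\<bar>)" unfolding B_def by (rule abs_sum_le)
      finally show "\<bar>(a - 0) * v $ i\<bar> \<le> (\<Sum>j<n. B i j * \<bar>v $ j\<bar>)" .
    qed
  qed
  have "Max {a. eigenvalue A a} = mu"
    by (rule Max_eqI[OF finite_eigs[OF Ac]]) (use le mem in auto)
  then show ?thesis unfolding A_def mu_def s_def t_def .
qed

lemma neg1_pred: "0 < k \<Longrightarrow> (-1::real) ^ (k - 1) = - ((-1) ^ k)"
  by (cases k) auto

lemma lap_part:
  assumes m: "m \<ge> 1" and d: "d = Suc m" and R: "R \<ge> 1"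
  shows "Max {a. eigenvalue (tree_lap_mat d R) a} = real d + 2 * sqrt (real m) * cos (pi / (real R + 1))"
proof -
  define n where "n = tree_size d R"
  have nN: "n = NN m (Suc R)" unfolding n_def tree_size_NN d by simp
  define s where "s = sqrt (real m)"
  have s: "s > 0" using m unfolding s_def by simp
  have s2: "s\<^sup>2 = real m" unfolding s_def by simp
  define t where "t = pi / (real R + 1)"
  define lam where "lam = real d + 2 * s * cos t"
  have lam': "lam = s\<^sup>2 + 1 + 2 * s * cos t" unfolding lam_def s2 d by simp
  define A where "A = tree_lap_mat d R"
  have Ac: "A \<in> carrier_mat n n" unfolding A_def n_def by (rule lap_carrier)
  define B where "B = (\<lambda>i j. if tree_adj d i j then 1 else (0::real))"
  define c where "c = (\<lambda>i. real (tree_deg d R i))"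
  define U where "U = (\<lambda>i. Gs s t (dep m i))"
  have depR: "dep m i \<le> R" if "i < n" for i using in_tree_iff[OF m] that nN by simp
  have Upos: "U i > 0" if "i < n" for i unfolding U_def using Gs_pos[OF s t_def depR[OF that] R] .
  have ceq: "c i = (if 0 < dep m i then 1 else 0) + (if dep m i < R then s\<^sup>2 else 0)" if i: "i < n" for i
    unfolding c_def using deg_eq[OF m d, of i R] i nN dep_pos_iff[of m i] s2 by simp
  define P where "P = (\<lambda>i. if 0 < dep m i then Gs s t (dep m i - 1) else 0)"
  define Q where "Q = (\<lambda>i. if dep m i < R then s\<^sup>2 * Gs s t (Suc (dep m i)) else 0)"
  have key: "c i * U i + P i + Q i = lam * U i" if i: "i < n" for i
    unfolding ceq[OF i] U_def P_def Q_def lam' using lap_eq[OF s R t_def depR[OF i]] by simp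
  have Ueq: "(\<Sum>j<n. B i j * U j) = P i + Q i" if i: "i < n" for i
    unfolding B_def U_def nN P_def Q_def using radial_sum[OF m d, of i R "Gs s t"] i nN s2 by simp
  have Weq: "(\<Sum>j<n. B i j * ((-1) ^ dep m j * U j)) = - ((-1) ^ dep m i * (P i + Q i))" if i: "i < n" for i
  proof -
    have "(\<Sum>j<n. B i j * ((-1) ^ dep m j * U j)) =
       (if 0 < dep m i then (-1) ^ (dep m i - 1) * Gs s t (dep m i - 1) else 0) +
       (if dep m i < R then real m * ((-1) ^ Suc (dep m i) * Gs s t (Suc (dep m i))) else 0)"
      unfolding B_def U_def nN using radial_sum[OF m d, of i R "\<lambda>k. (-1) ^ k * Gs s t k"] i nN by simp
    also have "\<dots> = - ((-1) ^ dep m i * (P i + Q i))"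
      unfolding P_def Q_def s2 using neg1_pred[of "dep m i"] by (auto simp: algebra_simps)
    finally show ?thesis .
  qed
  have n0: "0 < n" using depR[of 0] nN NN_strict[OF m, of 0 "Suc R"] by (simp add: NN_def)
  have mem: "lam \<in> {a. eigenvalue A a}"
  proof -
    define u where "u = vec n (\<lambda>i. (-1) ^ dep m i * U i)"
    have uc: "u \<in> carrier_vec n" unfolding u_def by simp
    have "u \<noteq> 0\<^sub>v n"
    proof
      assume "u = 0\<^sub>v n"
      then have "u $ 0 = 0" using n0 by simp
      then show False using Upos[OF n0] unfolding u_def using n0 by simp
    qed
    moreover have "A *\<^sub>v u = lam \<cdot>\<^sub>v u"
    proof (rule eq_vecI)
      show "dim_vec (A *\<^sub>v u) = dim_vec (lam \<cdot>\<^sub>v u)" using Ac uc by simp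
      fix i assume "i < dim_vec (lam \<cdot>\<^sub>v u)"
      then have i: "i < n" using uc by simp
      have "(A *\<^sub>v u) $ i = c i * u $ i - (\<Sum>j<n. B i j * u $ j)" unfolding A_def B_def n_def c_def
        using lap_mult uc i n_def by simp
      also have "(\<Sum>j<n. B i j * u $ j) = (\<Sum>j<n. B i j * ((-1) ^ dep m j * U j))"
        unfolding u_def by (rule sum.cong) auto
      also have "c i * u $ i - \<dots> = (-1) ^ dep m i * (c i * U i + P i + Q i)"
        unfolding Weq[OF i] u_def using i by (simp add: algebra_simps)
      also have "\<dots> = (lam \<cdot>\<^sub>v u) $ i" unfolding key[OF i] u_def using i by simp
      finally show "(A *\<^sub>v u) $ i = (lam \<cdot>\<^sub>v u) $ i" .
    qed
    ultimately show ?thesis unfolding eigenvalue_def eigenvector_def using uc Ac by auto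
  qed
  have le: "a \<le> lam" if ha: "a \<in> {a. eigenvalue A a}" for a
  proof -
    obtain v where v: "v \<in> carrier_vec n" "v \<noteq> 0\<^sub>v n" "A *\<^sub>v v = a \<cdot>\<^sub>v v"
      using ha Ac unfolding eigenvalue_def eigenvector_def by auto
    obtain k where k: "k < n" "v $ k \<noteq> 0" using nonzero_entry[OF v(1,2)] by blast
    show ?thesis
    proof (rule cw_bound[where c = c and B = B and u = U and v = "\<lambda>j. v $ j" and n = n])
      show "\<And>i j. i < n \<Longrightarrow> j < n \<Longrightarrow> 0 \<le> B i j" unfolding B_def by simp
      show "\<And>i. i < n \<Longrightarrow> 0 < U i" by (rule Upos)
      show "\<And>i. i < n \<Longrightarrow> c i * U i + (\<Sum>j<n. B i j * U j) = lam * U i" using Ueq key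
        by (simp add: add.assoc)
      show "k < n" "v $ k \<noteq> 0" by (rule k(1), rule k(2))
      fix i assume i: "i < n"
      have "a * v $ i = (A *\<^sub>v v) $ i" using v(3) i v(1) by simp
      also have "\<dots> = c i * v $ i - (\<Sum>j<n. B i j * v $ j)" unfolding A_def B_def n_def c_def
        using lap_mult v(1) i n_def by simp
      finally have "\<bar>(a - c i) * v $ i\<bar> = \<bar>\<Sum>j<n. B i j * v $ j\<bar>" by (simp add: algebra_simps)
      also have "\<dots> \<le> (\<Sum>j<n. B i j * \<bar>v $ j\<bar>)" unfolding B_def by (rule abs_sum_le)
      finally show "\<bar>(a - c i) * v $ i\<bar> \<le> (\<Sum>j<n. B i j * \<bar>v $ j\<bar>)" .
    qed
  qed
  have "Max {a. eigenvalue A a} = lam"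
    by (rule Max_eqI[OF finite_eigs[OF Ac]]) (use le mem in auto)
  then show ?thesis unfolding A_def lam_def s_def t_def .
qed

theorem mainTheorem19:
  fixes d R :: nat
  assumes "d \<ge> 2" and "R \<ge> 1"
  shows "Max {a. eigenvalue (tree_adj_mat d R) a} = 2 * sqrt (real d - 1) * cos (pi / (real R + 2))
       \<and> Max {l. eigenvalue (tree_lap_mat d R) l} = real d + 2 * sqrt (real d - 1) * cos (pi / (real R + 1))"
proof -
  obtain m where d: "d = Suc m" using assms(1) by (cases d) auto
  have m: "m \<ge> 1" using assms(1) d by simp
  have r: "real d - 1 = real m" using d by simp
  show ?thesis unfolding r using adj_part[OF m d assms(2)] lap_part[OF m d assms(2)] by simp
qed


end
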